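(* Let $k\ge1$, $d\ge1$ and $n_1,\dots,n_k\ge2$ be integers and $n:=n_1\cdots n_k$. There exists an injective $\Sigma_k(n_1,\dots,n_k)$-equivariant linear map \[ W_n^{\oplus(d-1)}\longrightarrow W_k(d;n_1,\dots,n_k), \] where $\Sigma_k(n_1,\dots,n_k)$ acts on $W_n^{\oplus(d-1)}$ via the inclusion $\Sigma_k(n_1,\dots,n_k)\subseteq S_n$.
   Context: $W_m=\{x\in\mathbb{R}^m:\sum x_i=0\}$ with $S_m$ acting by $\tau\cdot(x_1,\dots,x_m)=(x_{\tau^{-1}(1)},\dots,x_{\tau^{-1}(m)})$, diagonally on $W_m^{\oplus(d-1)}$. Wreath product action: if $G$ acts on $X$ and $S_m$ on $Y$, $G^{\times m}\rtimes S_m$ ($S_m$ permuting factors) acts on $X^{\times m}\times Y$ by $(g_1,\dots,g_m;\sigma)\cdot(x_1,\dots,x_m;y)=(g_1x_{\sigma^{-1}(1)},\dots,g_mx_{\sigma^{-1}(m)};\sigma y)$. $\Sigma_1(n_1)=S_{n_1}$, $\Sigma_k(n_1,\dots,n_k)=\Sigma_{k-1}(n_1,\dots,n_{k-1})^{\times n_k}\rtimes S_{n_k}$. $W_1(d;n_1)=W_{n_1}^{\oplus(d-1)}$, $W_k(d;n_1,\dots,n_k)=W_{k-1}(d;n_1,\dots,n_{k-1})^{\oplus n_k}\oplus W_{n_k}^{\oplus(d-1)}$ with the inductively defined wreath product action. Inclusion $\Sigma_k(n_1,\dots,n_k)\subseteq S_n$: for $k=1$ the identity; for $k\ge2$, with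 $n'=n_1\cdots n_{k-1}$, identify $[n]$ with $[n']\times[n_k]$ via $(i,j)\leftrightarrow(j-1)n'+i$, and let $(\Sigma_1,\dots,\Sigma_{n_k};\sigma)$ act by $(i,j)\mapsto(\Sigma_{\sigma(j)}(i),\sigma(j))$, with each $\Sigma_l\in\Sigma_{k-1}(n_1,\dots,n_{k-1})\subseteq S_{n'}$ inductively. *)

theory Defs
  imports Complex_Main "HOL-Combinatorics.Permutations"
begin

text \<open>All index sets are 0-based: [m] is rendered as {0..<m}.
  Lists ns = [n_1,...,n_k]; the recursive definitions below work on the
  reversed list (n_k # ... # n_1), so that the head is the outermost factor.\<close>

text \<open>Elements of the iterated wreath products Sigma_k.
  Base s : an element s of S_{n_1} (k = 1).
  Wr gs s : the element (g_1,...,g_{n_k}; s) with gs = [g_1,...,g_{n_k}].\<close>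
datatype wr = Base "nat \<Rightarrow> nat" | Wr "wr list" "nat \<Rightarrow> nat"

fun inSigR :: "nat list \<Rightarrow> wr \<Rightarrow> bool" where
  "inSigR [m] (Base s) = (s permutes {..<m})"
| "inSigR (m # ms) (Wr gs s) =
     (ms \<noteq> [] \<and> length gs = m \<and> (\<forall>g\<in>set gs. inSigR ms g) \<and> s permutes {..<m})"
| "inSigR _ _ = False"

definition inSigma :: "nat list \<Rightarrow> wr \<Rightarrow> bool" where
  "inSigma ns g = inSigR (rev ns) g"

text \<open>The inclusion Sigma_k(n_1,...,n_k) into S_n, with [n] = [n'] x [n_k] via
  (i,j) <-> j*n' + i (0-based version of (j-1)n'+i), and
  (g_1..g_{n_k}; s) acting by (i,j) |-> (g_{s j} i, s j).\<close>
fun embR :: "nat list \<Rightarrow> wr \<Rightarrow> nat \<Rightarrow> nat" where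
  "embR [m] (Base s) = s"
| "embR (m # ms) (Wr gs s) =
     (\<lambda>p. if p < m * prod_list ms
          then s (p div prod_list ms) * prod_list ms
               + embR ms (gs ! s (p div prod_list ms)) (p mod prod_list ms)
          else p)"
| "embR _ _ = id"

definition embS :: "nat list \<Rightarrow> wr \<Rightarrow> nat \<Rightarrow> nat" where
  "embS ns g = embR (rev ns) g"

text \<open>W_n^{(d-1)}: vectors x(a,i), a < d-1 (copy), i < n (coordinate),
  zero outside this range, with coordinate sum 0 in each copy.\<close>
definition Wn :: "nat \<Rightarrow> nat \<Rightarrow> (nat \<times> nat \<Rightarrow> real) set" where
  "Wn d n = {x. (\<forall>a i. x (a, i) \<noteq> 0 \<longrightarrow> a < d - 1 \<and> i < n)
               \<and> (\<forall>a < d - 1. (\<Sum>i<n. x (a, i)) = 0)}"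

definition actS :: "(nat \<Rightarrow> nat) \<Rightarrow> (nat \<times> nat \<Rightarrow> real) \<Rightarrow> nat \<times> nat \<Rightarrow> real" where
  "actS t x = (\<lambda>(a, i). x (a, inv t i))"

text \<open>W_k(d;n_1,...,n_k) as functions on coordinates (lists of naturals):
  coordinate 0 # j # c is coordinate c of the j-th summand W_{k-1} (j < n_k);
  coordinate [1, a, i] is coordinate i of the a-th copy of W_{n_k} (a < d-1).\<close>
fun inWR :: "nat \<Rightarrow> nat list \<Rightarrow> (nat list \<Rightarrow> real) \<Rightarrow> bool" where
  "inWR d [] x = False"
| "inWR d [m] x =
     ((\<forall>c. x c \<noteq> 0 \<longrightarrow> (\<exists>a i. c = [1, a, i] \<and> a < d - 1 \<and> i < m))
      \<and> (\<forall>a < d - 1. (\<Sum>i<m. x [1, a, i]) = 0))"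
| "inWR d (m # ms) x =
     ((\<forall>c. x c \<noteq> 0 \<longrightarrow> (\<exists>j c'. c = 0 # j # c' \<and> j < m)
                          \<or> (\<exists>a i. c = [1, a, i] \<and> a < d - 1 \<and> i < m))
      \<and> (\<forall>j < m. inWR d ms (\<lambda>c'. x (0 # j # c')))
      \<and> (\<forall>a < d - 1. (\<Sum>i<m. x [1, a, i]) = 0))"

definition Wk :: "nat \<Rightarrow> nat list \<Rightarrow> (nat list \<Rightarrow> real) set" where
  "Wk d ns = {x. inWR d (rev ns) x}"

definition lastpart :: "(nat \<Rightarrow> nat) \<Rightarrow> (nat list \<Rightarrow> real) \<Rightarrow> nat list \<Rightarrow> real" where
  "lastpart s x c = (if length c = 3 \<and> c ! 0 = 1 then x [1, c ! 1, inv s (c ! 2)] else x c)"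

text \<open>Wreath product action:
  (g_1..g_m; s).(x_1..x_m; y) = (g_1 x_{s^{-1} 1}, ..., g_m x_{s^{-1} m}; s y).\<close>
fun actR :: "nat list \<Rightarrow> wr \<Rightarrow> (nat list \<Rightarrow> real) \<Rightarrow> nat list \<Rightarrow> real" where
  "actR [m] (Base s) x c = lastpart s x c"
| "actR (m # ms) (Wr gs s) x c =
     (if c \<noteq> [] \<and> hd c = 0 \<and> tl c \<noteq> []
      then actR ms (gs ! hd (tl c)) (\<lambda>c''. x (0 # inv s (hd (tl c)) # c'')) (tl (tl c))
      else lastpart s x c)"
| "actR _ _ x c = x c"

definition actW :: "nat list \<Rightarrow> wr \<Rightarrow> (nat list \<Rightarrow> real) \<Rightarrow> nat list \<Rightarrow> real" where
  "actW ns g x = actR (rev ns) g x"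

definition lin_on :: "('a \<Rightarrow> real) set \<Rightarrow> (('a \<Rightarrow> real) \<Rightarrow> ('b \<Rightarrow> real)) \<Rightarrow> bool" where
  "lin_on A f = (\<forall>x\<in>A. \<forall>y\<in>A. \<forall>a b::real.
      f (\<lambda>c. a * x c + b * y c) = (\<lambda>c. a * f x c + b * f y c))"

end

theory Submission
  imports Defs
begin

definition blk :: "nat \<Rightarrow> nat \<Rightarrow> (nat \<times> nat \<Rightarrow> real) \<Rightarrow> nat \<Rightarrow> nat \<times> nat \<Rightarrow> real" where
  "blk d P x j = (\<lambda>(a,u). if a < d - 1 \<and> u < P
      then x (a, j*P+u) - (\<Sum>v<P. x (a, j*P+v)) / real P else 0)"

fun Fm :: "nat \<Rightarrow> nat list \<Rightarrow> (nat \<times> nat \<Rightarrow> real) \<Rightarrow> nat list \<Rightarrow> real" where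
  "Fm d [] x c = 0"
| "Fm d [m] x c = (if length c = 3 \<and> c!0 = 1 \<and> c!1 < d-1 \<and> c!2 < m then x (c!1, c!2) else 0)"
| "Fm d (m # v # ms) x c =
     (if length c = 3 \<and> c!0 = 1 \<and> c!1 < d-1 \<and> c!2 < m
      then (\<Sum>u<prod_list (v#ms). x (c!1, c!2 * prod_list (v#ms) + u))
      else if 2 \<le> length c \<and> c!0 = 0 \<and> c!1 < m
      then Fm d (v#ms) (blk d (prod_list (v#ms)) x (c!1)) (drop 2 c) else 0)"

lemma c_cases:
  obtains a i where "c = [1,a,i]" | j c' where "c = 0#j#c'"
   | "\<nexists>a i. c = [1,a,i]" "\<nexists>j c'. c = 0#j#c'"
  by blast

lemma len3: "length c = 3 \<Longrightarrow> c!0 = 1 \<Longrightarrow> \<exists>a i. c = [1,a,i]"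
  by (cases c; cases "tl c"; cases "tl (tl c)"; auto simp: numeral_eq_Suc)

lemma len2: "2 \<le> length c \<Longrightarrow> c!0 = 0 \<Longrightarrow> \<exists>j c'. c = 0#j#c'"
  by (cases c; cases "tl c"; auto)

lemma Fm1_1: "Fm d [m] x [1,a,i] = (if a < d-1 \<and> i < m then x (a,i) else 0)"
  by simp
lemma Fm1_o: "\<nexists>a i. c = [1,a,i] \<Longrightarrow> Fm d [m] x c = 0"
proof -
  assume "\<nexists>a i. c = [1,a,i]"
  then have "\<not> (length c = 3 \<and> c!0 = 1)" using len3 by blast
  then show ?thesis by auto
qed

lemma FmC_1: "ms \<noteq> [] \<Longrightarrow> Fm d (m#ms) x [1,a,i] =
   (if a < d-1 \<and> i < m then (\<Sum>u<prod_list ms. x (a, i * prod_list ms + u)) else 0)"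
  by (cases ms) auto
lemma FmC_1': "ms \<noteq> [] \<Longrightarrow> Fm d (m#ms) x [Suc 0,a,i] =
   (if a < d-1 \<and> i < m then (\<Sum>u<prod_list ms. x (a, i * prod_list ms + u)) else 0)"
  using FmC_1 by simp
lemma FmC_0: "ms \<noteq> [] \<Longrightarrow> Fm d (m#ms) x (0#j#c) =
   (if j < m then Fm d ms (blk d (prod_list ms) x j) c else 0)"
  by (cases ms) auto
lemma FmC_o: "ms \<noteq> [] \<Longrightarrow> \<nexists>a i. c = [1,a,i] \<Longrightarrow> \<nexists>j c'. c = 0#j#c' \<Longrightarrow> Fm d (m#ms) x c = 0"
proof -
  assume "ms \<noteq> []" "\<nexists>a i. c = [1,a,i]" "\<nexists>j c'. c = 0#j#c'"
  then have "\<not> (length c = 3 \<and> c!0 = 1)" "\<not> (2 \<le> length c \<and> c!0 = 0)" using len3 len2 by blast+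
  then show ?thesis using \<open>ms \<noteq> []\<close> by (cases ms) auto
qed

lemma lastpart_1: "lastpart s x [1,a,i] = x [1,a,inv s i]"
  by (simp add: lastpart_def)
lemma lastpart_1': "lastpart s x [Suc 0,a,i] = x [Suc 0,a,inv s i]"
  by (simp add: lastpart_def)
lemma lastpart_o: "\<nexists>a i. c = [1,a,i] \<Longrightarrow> lastpart s x c = x c"
proof -
  assume "\<nexists>a i. c = [1,a,i]"
  then have "\<not> (length c = 3 \<and> c!0 = 1)" using len3 by blast
  then show ?thesis by (auto simp add: lastpart_def)
qed

lemma actR_0: "actR ms g (\<lambda>_. 0) = (\<lambda>_. 0)"
proof -
  have "actR ms g (\<lambda>_. 0) c = 0" for c
    by (induction ms g "\<lambda>_::nat list. 0::real" c rule: actR.induct) (auto simp: lastpart_def)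
  then show ?thesis by auto
qed

lemma actR_W0: "actR (m#ms) (Wr gs s) x (0#j#c) = actR ms (gs!j) (\<lambda>c''. x (0 # inv s j # c'')) c"
  by simp
lemma actR_Wo: "\<nexists>j c'. c = 0#j#c' \<Longrightarrow> actR (m#ms) (Wr gs s) x c = lastpart s x c"
  by (cases c; cases "tl c") auto


lemma sum_split_add: "(\<Sum>p<a+b. h p) = (\<Sum>p<a. h p) + (\<Sum>u<b. h (a+u))"
  for h :: "nat \<Rightarrow> real"
  by (induct b) (auto simp: add.assoc)

lemma sum_blocks: "(\<Sum>i<m. \<Sum>u<P. h (i*P+u)) = (\<Sum>p<m*P. h p)"
  for h :: "nat \<Rightarrow> real"
proof (induct m)
  case (Suc m)
  have "(\<Sum>p<Suc m * P. h p) = (\<Sum>p<m*P + P. h p)" by (simp add: add.commute)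
  also have "\<dots> = (\<Sum>p<m*P. h p) + (\<Sum>u<P. h (m*P+u))" by (rule sum_split_add)
  finally show ?case using Suc by simp
qed simp

lemma dm: "u < (P::nat) \<Longrightarrow> (j*P+u) div P = j \<and> (j*P+u) mod P = u"
  by auto

lemma lt_prod: "j < (m::nat) \<Longrightarrow> u < P \<Longrightarrow> j*P+u < m*P"
proof -
  assume "j < m" "u < P"
  then have "Suc j * P \<le> m * P" by (intro mult_le_mono1) simp
  then show ?thesis using \<open>u < P\<close> by simp
qed

lemma sum_perm: "p permutes {..<P} \<Longrightarrow> (\<Sum>v<P. h (p v)) = (\<Sum>v<P. h v)"
  for h :: "nat \<Rightarrow> real"
  using sum.permute[of p "{..<P}" h] by (simp add: o_def)

lemma prod_pos: "\<forall>m\<in>set ms. m \<ge> (1::nat) \<Longrightarrow> prod_list ms > 0"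
  by (induct ms) auto

lemma embR_perm: "inSigR ms g \<Longrightarrow> \<forall>m\<in>set ms. m \<ge> 1 \<Longrightarrow> embR ms g permutes {..<prod_list ms}"
proof (induction ms arbitrary: g)
  case Nil
  then show ?case by (cases g) auto
next
  case (Cons m ms)
  show ?case
  proof (cases "ms = []")
    case True
    then show ?thesis using Cons.prems by (cases g) auto
  next
    case False
    obtain gs s where g: "g = Wr gs s"
      using Cons.prems False by (cases g; cases ms) auto
    define P where "P = prod_list ms"
    have P0: "P > 0" using Cons.prems prod_pos unfolding P_def by auto
    have s: "s permutes {..<m}" and gs: "\<And>h. h \<in> set gs \<Longrightarrow> inSigR ms h" and lg: "length gs = m"
      using Cons.prems g by auto
    have e: "j < m \<Longrightarrow> embR ms (gs!j) permutes {..<P}" for j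
      using Cons.IH[of "gs!j"] gs lg Cons.prems unfolding P_def by auto
    define t where "t = embR (m#ms) g"
    have tp: "p < m*P \<Longrightarrow> t p = s (p div P) * P + embR ms (gs ! s (p div P)) (p mod P)" for p
      unfolding t_def g P_def by simp
    have to: "\<not> p < m*P \<Longrightarrow> t p = p" for p
      unfolding t_def g P_def by simp
    have sj: "j < m \<Longrightarrow> s j < m" for j using permutes_in_image[OF s] by auto
    have divm: "p < m*P \<Longrightarrow> p div P < m" for p
      by (simp add: less_mult_imp_div_less)
    have inS: "p < m*P \<Longrightarrow> t p < m*P" for p
    proof -
      assume p: "p < m*P"
      have "embR ms (gs ! s (p div P)) (p mod P) < P"
        using permutes_in_image[OF e[OF sj[OF divm[OF p]]]] P0 by auto
      then show ?thesis using tp[OF p] lt_prod sj[OF divm[OF p]] by auto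
    qed
    have inj: "inj_on t {..<m*P}"
    proof (rule inj_onI)
      fix p q assume p: "p \<in> {..<m*P}" and q: "q \<in> {..<m*P}" and eq: "t p = t q"
      let ?j = "p div P" and ?k = "q div P"
      have ej: "embR ms (gs ! s ?j) (p mod P) < P"
        using permutes_in_image[OF e[OF sj[OF divm]]] p P0 by auto
      have ek: "embR ms (gs ! s ?k) (q mod P) < P"
        using permutes_in_image[OF e[OF sj[OF divm]]] q P0 by auto
      have "s ?j = s ?k" using eq tp p q dm[OF ej, of "s ?j"] dm[OF ek, of "s ?k"] by auto
      then have jk: "?j = ?k" using permutes_inj[OF s] by (auto dest: injD)
      have "embR ms (gs ! s ?j) (p mod P) = embR ms (gs ! s ?j) (q mod P)"
        using eq tp p q dm[OF ej, of "s ?j"] dm[OF ek, of "s ?k"] jk by auto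
      then have "p mod P = q mod P" using permutes_inj[OF e[OF sj[OF divm]]] p by (auto dest: injD)
      then show "p = q" using jk by (metis div_mod_decomp)
    qed
    have "t ` {..<m*P} = {..<m*P}"
      by (rule endo_inj_surj) (use inS inj in auto)
    then have "bij_betw t {..<m*P} {..<m*P}" using inj by (simp add: bij_betw_def)
    then have "t permutes {..<m*P}" by (rule bij_imp_permutes) (use to in auto)
    then show ?thesis unfolding t_def P_def by simp
  qed
qed


lemma embR_inv:
  assumes g: "inSigR (m#ms) (Wr gs s)" and pos: "\<forall>m\<in>set (m#ms). m \<ge> 1"
    and j: "j < m" and u: "u < prod_list ms"
  shows "inv (embR (m#ms) (Wr gs s)) (j * prod_list ms + u)
         = inv s j * prod_list ms + inv (embR ms (gs!j)) u"
proof -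
  define P where "P = prod_list ms"
  have ms: "ms \<noteq> []" using g by auto
  have s: "s permutes {..<m}" and gs: "\<And>h. h \<in> set gs \<Longrightarrow> inSigR ms h" and lg: "length gs = m"
    using g by auto
  have e: "embR ms (gs!j) permutes {..<P}"
    using embR_perm[of ms "gs!j"] gs lg pos j unfolding P_def by auto
  have t: "embR (m#ms) (Wr gs s) permutes {..<m*P}"
    using embR_perm[OF g] pos unfolding P_def by simp
  have ij: "inv s j < m" using permutes_in_image[OF permutes_inv[OF s]] j by auto
  have iu: "inv (embR ms (gs!j)) u < P" using permutes_in_image[OF permutes_inv[OF e]] u P_def by auto
  have lt: "inv s j * P + inv (embR ms (gs!j)) u < m*P" using lt_prod[OF ij iu] .
  have "embR (m#ms) (Wr gs s) (inv s j * P + inv (embR ms (gs!j)) u) = j*P+u"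
    using lt dm[OF iu] permutes_inverses[OF s] permutes_inverses[OF e] unfolding P_def by simp
  then show ?thesis using permutes_inv_eq[OF t] unfolding P_def by blast
qed

lemma blk_Wn: "P > 0 \<Longrightarrow> blk d P x j \<in> Wn d P"
proof -
  assume P: "P > 0"
  have "(\<Sum>u<P. x (a, j*P+u) - (\<Sum>v<P. x (a, j*P+v)) / real P) = 0" for a
    using P by (simp add: sum_subtractf)
  then show ?thesis unfolding Wn_def blk_def by auto
qed

lemma blk_lin: "blk d P (\<lambda>c. \<alpha> * x c + \<beta> * y c) j = (\<lambda>c. \<alpha> * blk d P x j c + \<beta> * blk d P y j c)"
  unfolding blk_def
  by (auto simp: fun_eq_iff sum.distrib sum_distrib_left[symmetric] add_divide_distrib algebra_simps)

lemma blk_act: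
  assumes g: "inSigR (m#ms) (Wr gs s)" and pos: "\<forall>m\<in>set (m#ms). m \<ge> 1" and j: "j < m"
  shows "blk d (prod_list ms) (actS (embR (m#ms) (Wr gs s)) x) j
       = actS (embR ms (gs!j)) (blk d (prod_list ms) x (inv s j))"
proof -
  define P where "P = prod_list ms"
  have gs: "\<And>h. h \<in> set gs \<Longrightarrow> inSigR ms h" and lg: "length gs = m"
    using g by auto
  have e: "embR ms (gs!j) permutes {..<P}"
    using embR_perm[of ms "gs!j"] gs lg pos j unfolding P_def by auto
  have ie: "inv (embR ms (gs!j)) permutes {..<P}" using permutes_inv[OF e] .
  have iv: "inv (embR (m#ms) (Wr gs s)) (j * P + v) = inv s j * P + inv (embR ms (gs!j)) v"
    if "v < P" for v using embR_inv[OF g pos j] that unfolding P_def by simp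
  show ?thesis unfolding P_def[symmetric]
  proof (rule ext, clarify)
    fix a u
    show "blk d P (actS (embR (m#ms) (Wr gs s)) x) j (a,u)
       = actS (embR ms (gs!j)) (blk d P x (inv s j)) (a,u)"
    proof (cases "u < P")
      case True
      have iu: "inv (embR ms (gs!j)) u < P" using permutes_in_image[OF ie] True by auto
      have "(\<Sum>v<P. x (a, inv (embR (m#ms) (Wr gs s)) (j*P+v)))
          = (\<Sum>v<P. x (a, inv s j * P + inv (embR ms (gs!j)) v))"
        using iv by simp
      also have "\<dots> = (\<Sum>v<P. x (a, inv s j * P + v))"
        using sum_perm[OF ie, of "\<lambda>v. x (a, inv s j * P + v)"] by simp
      finally show ?thesis using True iu iv[OF True] unfolding blk_def actS_def by simp
    next
      case False
      have "inv (embR ms (gs!j)) u = u" using permutes_not_in[OF ie] False by auto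
      then show ?thesis using False unfolding blk_def actS_def by simp
    qed
  qed
qed


lemma equiv:
  "ms \<noteq> [] \<Longrightarrow> \<forall>m\<in>set ms. m \<ge> 1 \<Longrightarrow> inSigR ms g \<Longrightarrow>
   Fm d ms (actS (embR ms g) x) = actR ms g (Fm d ms x)"
proof (induction ms arbitrary: g x)
  case Nil then show ?case by simp
next
  case (Cons m ms)
  show ?case
  proof (cases "ms = []")
    case True
    then obtain s where g: "g = Base s" and s: "s permutes {..<m}"
      using Cons.prems by (cases g) auto
    have is_: "inv s i < m \<longleftrightarrow> i < m" for i
      using permutes_in_image[OF permutes_inv[OF s]] by auto
    show ?thesis
    proof
      fix c show "Fm d (m # ms) (actS (embR (m # ms) g) x) c = actR (m # ms) g (Fm d (m # ms) x) c"
      proof (cases c rule: c_cases)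
        case (1 a i)
        then show ?thesis using True g is_ by (simp add: lastpart_def actS_def)
      next
        case (2 j c')
        then show ?thesis using True g Fm1_o lastpart_o by simp
      next
        case 3
        then show ?thesis using True g Fm1_o lastpart_o by simp
      qed
    qed
  next
    case False
    obtain gs s where g: "g = Wr gs s"
      using Cons.prems False by (cases g; cases ms) auto
    define P where "P = prod_list ms"
    have P0: "P > 0" using Cons.prems prod_pos unfolding P_def by auto
    have s: "s permutes {..<m}" and gs: "\<And>h. h \<in> set gs \<Longrightarrow> inSigR ms h" and lg: "length gs = m"
      using Cons.prems g by auto
    have pos: "\<forall>m\<in>set ms. m \<ge> 1" using Cons.prems by auto
    have e: "j < m \<Longrightarrow> embR ms (gs!j) permutes {..<P}" for j
      using embR_perm[of ms "gs!j"] gs lg pos unfolding P_def by auto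
    have is_: "inv s i < m \<longleftrightarrow> i < m" for i
      using permutes_in_image[OF permutes_inv[OF s]] by auto
    have isn: "\<not> i < m \<Longrightarrow> inv s i = i" for i
      using permutes_not_in[OF permutes_inv[OF s]] by auto
    let ?t = "embR (m#ms) (Wr gs s)"
    show ?thesis unfolding g
    proof
      fix c show "Fm d (m # ms) (actS ?t x) c = actR (m # ms) (Wr gs s) (Fm d (m # ms) x) c"
      proof (cases c rule: c_cases)
        case (1 a i)
        show ?thesis
        proof (cases "a < d - 1 \<and> i < m")
          case True
          have i: "i < m" using True by simp
          have ie: "inv (embR ms (gs!i)) permutes {..<P}" using permutes_inv[OF e[OF i]] .
          have "(\<Sum>u<P. actS ?t x (a, i*P+u)) = (\<Sum>u<P. x (a, inv s i * P + inv (embR ms (gs!i)) u))"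
            unfolding actS_def using embR_inv[OF Cons.prems(3)[unfolded g] Cons.prems(2) i] P_def by simp
          also have "\<dots> = (\<Sum>u<P. x (a, inv s i * P + u))"
            using sum_perm[OF ie, of "\<lambda>v. x (a, inv s i * P + v)"] by simp
          finally show ?thesis using 1 True is_ False
            by (simp add: FmC_1' lastpart_1' actR_Wo P_def)
        next
          case F2: False
          then show ?thesis using 1 is_ False
            by (auto simp add: FmC_1' lastpart_1' actR_Wo)
        qed
      next
        case (2 j c')
        show ?thesis
        proof (cases "j < m")
          case True
          have ij: "inv s j < m" using is_ True by simp
          have "(\<lambda>c''. Fm d (m # ms) x (0 # inv s j # c'')) = Fm d ms (blk d P x (inv s j))"
            using FmC_0[OF False] ij P_def by auto
          moreover have "blk d P (actS ?t x) j = actS (embR ms (gs!j)) (blk d P x (inv s j))"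
            using blk_act[OF Cons.prems(3)[unfolded g] Cons.prems(2) True] P_def by simp
          moreover have "inSigR ms (gs!j)" using gs lg True by auto
          ultimately show ?thesis using 2 True FmC_0[OF False] Cons.IH[OF False pos] P_def
            by simp
        next
          case F2: False
          have "(\<lambda>c''. Fm d (m # ms) x (0 # inv s j # c'')) = (\<lambda>_. 0)"
            using FmC_0[OF False] isn[OF F2] F2 by auto
          then show ?thesis using 2 F2 FmC_0[OF False] actR_0 by simp
        qed
      next
        case 3
        then show ?thesis using False FmC_o lastpart_o actR_Wo by simp
      qed
    qed
  qed
qed


lemma inWR_C: "ms \<noteq> [] \<Longrightarrow> inWR d (m # ms) x =
     ((\<forall>c. x c \<noteq> 0 \<longrightarrow> (\<exists>j c'. c = 0 # j # c' \<and> j < m)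
                          \<or> (\<exists>a i. c = [1, a, i] \<and> a < d - 1 \<and> i < m))
      \<and> (\<forall>j < m. inWR d ms (\<lambda>c'. x (0 # j # c')))
      \<and> (\<forall>a < d - 1. (\<Sum>i<m. x [1, a, i]) = 0))"
  by (cases ms) auto

lemma image:
  "ms \<noteq> [] \<Longrightarrow> \<forall>m\<in>set ms. m \<ge> 1 \<Longrightarrow> x \<in> Wn d (prod_list ms) \<Longrightarrow> inWR d ms (Fm d ms x)"
proof (induction ms arbitrary: x)
  case Nil then show ?case by simp
next
  case (Cons m ms)
  show ?case
  proof (cases "ms = []")
    case True
    have supp: "\<exists>a i. c = [1, a, i] \<and> a < d - 1 \<and> i < m" if "Fm d [m] x c \<noteq> 0" for c
    proof (cases c rule: c_cases)
      case (1 a i) then show ?thesis using that by (auto split: if_splits)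
    next
      case (2 j c') then show ?thesis using that Fm1_o by auto
    next
      case 3 then show ?thesis using that Fm1_o by auto
    qed
    have "(\<Sum>i<m. Fm d [m] x [1, a, i]) = 0" if "a < d - 1" for a
      using Cons.prems(3) True that unfolding Wn_def by simp
    then show ?thesis using True supp by simp
  next
    case False
    define P where "P = prod_list ms"
    have P0: "P > 0" using Cons.prems prod_pos unfolding P_def by auto
    have pos: "\<forall>m\<in>set ms. m \<ge> 1" using Cons.prems by auto
    have supp: "(\<exists>j c'. c = 0 # j # c' \<and> j < m) \<or> (\<exists>a i. c = [1, a, i] \<and> a < d - 1 \<and> i < m)"
      if "Fm d (m#ms) x c \<noteq> 0" for c
    proof (cases c rule: c_cases)
      case (1 a i) then show ?thesis using that False by (auto simp: FmC_1' split: if_splits)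
    next
      case (2 j c') then show ?thesis using that False by (auto simp: FmC_0 split: if_splits)
    next
      case 3 then show ?thesis using that FmC_o False by auto
    qed
    have sub: "inWR d ms (\<lambda>c'. Fm d (m#ms) x (0 # j # c'))" if "j < m" for j
    proof -
      have "(\<lambda>c'. Fm d (m#ms) x (0 # j # c')) = Fm d ms (blk d P x j)"
        using FmC_0[OF False] that P_def by auto
      then show ?thesis using Cons.IH[OF False pos blk_Wn[OF P0[unfolded P_def]]] P_def by simp
    qed
    have sm: "(\<Sum>i<m. Fm d (m#ms) x [1, a, i]) = 0" if "a < d - 1" for a
    proof -
      have "(\<Sum>i<m. Fm d (m#ms) x [1, a, i]) = (\<Sum>i<m. \<Sum>u<P. x (a, i*P+u))"
        using that FmC_1[OF False] P_def by simp
      also have "\<dots> = (\<Sum>p<m*P. x (a, p))" by (rule sum_blocks)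
      also have "\<dots> = 0" using Cons.prems(3) that P_def unfolding Wn_def by simp
      finally show ?thesis .
    qed
    show ?thesis using inWR_C[OF False] supp sub sm by blast
  qed
qed

lemma injF:
  "ms \<noteq> [] \<Longrightarrow> \<forall>m\<in>set ms. m \<ge> 1 \<Longrightarrow> x \<in> Wn d (prod_list ms) \<Longrightarrow> y \<in> Wn d (prod_list ms)
   \<Longrightarrow> Fm d ms x = Fm d ms y \<Longrightarrow> x = y"
proof (induction ms arbitrary: x y)
  case Nil then show ?case by simp
next
  case (Cons m ms)
  show ?case
  proof (cases "ms = []")
    case True
    show ?thesis
    proof (rule ext, clarify)
      fix a i
      show "x (a,i) = y (a,i)"
      proof (cases "a < d - 1 \<and> i < m")
        case True
        then show ?thesis using fun_cong[OF Cons.prems(5), of "[1,a,i]"] \<open>ms = []\<close> by simp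
      next
        case False
        then show ?thesis using Cons.prems(3,4) \<open>ms = []\<close> unfolding Wn_def by (simp; metis)
      qed
    qed
  next
    case False
    define P where "P = prod_list ms"
    have P0: "P > 0" using Cons.prems prod_pos unfolding P_def by auto
    have pos: "\<forall>m\<in>set ms. m \<ge> 1" using Cons.prems by auto
    show ?thesis
    proof (rule ext, clarify)
      fix a p
      show "x (a,p) = y (a,p)"
      proof (cases "a < d - 1 \<and> p < m*P")
        case True
        define j where "j = p div P"
        define u where "u = p mod P"
        have j: "j < m" using True j_def by (simp add: less_mult_imp_div_less)
        have u: "u < P" using P0 u_def by simp
        have p: "p = j*P+u" using j_def u_def by simp
        have S: "(\<Sum>v<P. x (a, j*P+v)) = (\<Sum>v<P. y (a, j*P+v))"
          using fun_cong[OF Cons.prems(5), of "[1,a,j]"] FmC_1[OF False] True j P_def by simp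
        have "Fm d ms (blk d P x j) = Fm d ms (blk d P y j)"
        proof
          fix c show "Fm d ms (blk d P x j) c = Fm d ms (blk d P y j) c"
            using fun_cong[OF Cons.prems(5), of "0#j#c"] FmC_0[OF False] j P_def by simp
        qed
        then have "blk d P x j = blk d P y j"
          using Cons.IH[OF False pos blk_Wn[OF P0[unfolded P_def]] blk_Wn[OF P0[unfolded P_def]]] P_def by simp
        then have "blk d P x j (a,u) = blk d P y j (a,u)" by simp
        then show ?thesis using S True u p unfolding blk_def by simp
      next
        case F2: False
        then show ?thesis using Cons.prems(3,4) P_def unfolding Wn_def by (simp; metis)
      qed
    qed
  qed
qed

lemma linF: "Fm d ms (\<lambda>c. \<alpha> * x c + \<beta> * y c) = (\<lambda>c. \<alpha> * Fm d ms x c + \<beta> * Fm d ms y c)"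
proof (induction ms arbitrary: x y)
  case Nil then show ?case by simp
next
  case (Cons m ms)
  show ?case
  proof (cases "ms = []")
    case True then show ?thesis by auto
  next
    case False
    show ?thesis
    proof
      fix c show "Fm d (m#ms) (\<lambda>c. \<alpha> * x c + \<beta> * y c) c = \<alpha> * Fm d (m#ms) x c + \<beta> * Fm d (m#ms) y c"
      proof (cases c rule: c_cases)
        case (1 a i) then show ?thesis using False
          by (simp add: FmC_1' sum.distrib sum_distrib_left)
      next
        case (2 j c') then show ?thesis using False Cons.IH
          by (simp add: FmC_0 blk_lin)
      next
        case 3 then show ?thesis using False FmC_o by simp
      qed
    qed
  qed
qed

lemma prod_list_rev: "prod_list (rev ns) = prod_list (ns::nat list)"
  by (induct ns) auto

theorem lemma4p4:
  fixes ns :: "nat list" and d :: nat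
  assumes "ns \<noteq> []" and "d \<ge> 1" and "\<forall>m\<in>set ns. m \<ge> 2"
  shows "\<exists>f. lin_on (Wn d (prod_list ns)) f
           \<and> inj_on f (Wn d (prod_list ns))
           \<and> f ` Wn d (prod_list ns) \<subseteq> Wk d ns
           \<and> (\<forall>g. inSigma ns g \<longrightarrow>
                (\<forall>x\<in>Wn d (prod_list ns).
                   f (actS (embS ns g) x) = actW ns g (f x)))"
proof (intro exI conjI)
  have ne: "rev ns \<noteq> []" using assms by simp
  have pos: "\<forall>m\<in>set (rev ns). m \<ge> 1" using assms by auto
  have P: "prod_list (rev ns) = prod_list ns" by (rule prod_list_rev)
  show "lin_on (Wn d (prod_list ns)) (Fm d (rev ns))"
    unfolding lin_on_def using linF by blast
  show "inj_on (Fm d (rev ns)) (Wn d (prod_list ns))"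
    using injF[OF ne pos] P by (auto intro: inj_onI)
  show "Fm d (rev ns) ` Wn d (prod_list ns) \<subseteq> Wk d ns"
    using image[OF ne pos] P unfolding Wk_def by auto
  show "\<forall>g. inSigma ns g \<longrightarrow> (\<forall>x\<in>Wn d (prod_list ns).
          Fm d (rev ns) (actS (embS ns g) x) = actW ns g (Fm d (rev ns) x))"
    using equiv[OF ne pos] unfolding inSigma_def embS_def actW_def by blast
qed

end
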